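(* Let $f$ be a binary NAM on $n$ features, $x\in\mathbb{R}^n$, $\epsilon>0$. Suppose real numbers $\ell_k\le u_k$ ($k\in[n]$) satisfy $\ell_k\le\Delta_k\le u_k$ for every $k$. Let $S\subseteq[n]$ be a sufficient explanation for $(f,x,\epsilon)$, let $i\in S$ and $j\notin S$, and suppose $u_i\le \ell_j$ (in particular, this holds whenever the intervals $[\ell_k,u_k]$ are pairwise non-overlapping and $i$ precedes $j$ in the ascending order of these intervals). Then $(S\setminus\{i\})\cup\{j\}$ is also a sufficient explanation for $(f,x,\epsilon)$.
   Context: A binary neural additive model (NAM) on $n$ features is a map $f:\mathbb{R}^n\to\{0,1\}$, $f(z)=\mathrm{step}\big(\beta_0+\sum_{k=1}^n f_k(z_k)\big)$, where $\beta_0\in\mathbb{R}$, each $f_k:\mathbb{R}\to\mathbb{R}$ is continuous (in the paper, a univariate ReLU neural network), and $\mathrm{step}(t)=1$ if $t\ge 0$ and $\mathrm{step}(t)=0$ otherwise. Fix $x\in\mathbb{R}^n$ and $\epsilon>0$ and let $B=\{\tilde x\in\mathbb{R}^n : |\tilde x_k-x_k|\le\epsilon \text{ for all } k\}$. For $S\subseteq[n]=\{1,\dots,n\}$ and $\tilde x\in\mathbb{R}^n$, $(x_S;\tilde x_{\bar S})$ denotes the vector agreeing with $x$ on the coordinates in $S$ and with $\tilde x$ on $\bar S=[n]\setminus S$. A set $S$ is a sufficient explanation for $(f,x,\epsilon)$ if $f(x_S;\tilde x_{\bar S})=f(x)$ for all $\tilde x\in B$. The importance of feature $k$ is $\Delta_k=f_k(x_k)-\min_{|t-x_k|\le\epsilon}f_k(t)$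 if $f(x)=1$, and $\Delta_k=\max_{|t-x_k|\le\epsilon}f_k(t)-f_k(x_k)$ if $f(x)=0$. *)

theory Defs
  imports "HOL-Analysis.Analysis"
begin

text \<open>Features are indexed by [n] = {1..n}; vectors in R^n are represented as
  functions nat => real of which only the coordinates 1..n matter.\<close>

definition step :: "real \<Rightarrow> nat" where
  "step t = (if t \<ge> 0 then 1 else 0)"

definition nam :: "nat \<Rightarrow> real \<Rightarrow> (nat \<Rightarrow> real \<Rightarrow> real) \<Rightarrow> (nat \<Rightarrow> real) \<Rightarrow> nat" where
  "nam n b0 fs z = step (b0 + (\<Sum>k=1..n. fs k (z k)))"

definition box :: "nat \<Rightarrow> (nat \<Rightarrow> real) \<Rightarrow> real \<Rightarrow> (nat \<Rightarrow> real) set" where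
  "box n x eps = {xt. \<forall>k\<in>{1..n}. \<bar>xt k - x k\<bar> \<le> eps}"

definition combine :: "nat set \<Rightarrow> (nat \<Rightarrow> real) \<Rightarrow> (nat \<Rightarrow> real) \<Rightarrow> (nat \<Rightarrow> real)" where
  "combine S x xt = (\<lambda>k. if k \<in> S then x k else xt k)"

definition sufficient_expl ::
  "nat \<Rightarrow> real \<Rightarrow> (nat \<Rightarrow> real \<Rightarrow> real) \<Rightarrow> (nat \<Rightarrow> real) \<Rightarrow> real \<Rightarrow> nat set \<Rightarrow> bool" where
  "sufficient_expl n b0 fs x eps S \<longleftrightarrow> S \<subseteq> {1..n} \<and>
     (\<forall>xt\<in>box n x eps. nam n b0 fs (combine S x xt) = nam n b0 fs x)"

text \<open>Importance Delta_k; min/max over the compact interval are attained by continuity,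
  so Inf/Sup of the image coincide with min/max.\<close>
definition importance ::
  "nat \<Rightarrow> real \<Rightarrow> (nat \<Rightarrow> real \<Rightarrow> real) \<Rightarrow> (nat \<Rightarrow> real) \<Rightarrow> real \<Rightarrow> nat \<Rightarrow> real" where
  "importance n b0 fs x eps k =
     (if nam n b0 fs x = 1
      then fs k (x k) - Inf (fs k ` {x k - eps .. x k + eps})
      else Sup (fs k ` {x k - eps .. x k + eps}) - fs k (x k))"

end

theory Submission
  imports Defs
begin

lemma sum_diff2:
  fixes g h :: "nat \<Rightarrow> real"
  assumes "i \<in> {1..n}" "j \<in> {1..n}" "i \<noteq> j"
    and "\<And>k. k \<in> {1..n} \<Longrightarrow> k \<noteq> i \<Longrightarrow> k \<noteq> j \<Longrightarrow> g k = h k"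
  shows "(\<Sum>k=1..n. g k) = (\<Sum>k=1..n. h k) + (g i - h i) + (g j - h j)"
proof -
  have A: "(\<Sum>k=1..n. g k) = g i + (g j + (\<Sum>k\<in>{1..n}-{i}-{j}. g k))"
  proof -
    have f: "finite {1..n}" "finite ({1..n}-{i})" by auto
    have "j \<in> {1..n}-{i}" using assms(2,3) by auto
    thus ?thesis using sum.remove[OF f(1) assms(1)] sum.remove[OF f(2)] by metis
  qed
  have B: "(\<Sum>k=1..n. h k) = h i + (h j + (\<Sum>k\<in>{1..n}-{i}-{j}. h k))"
  proof -
    have f: "finite {1..n}" "finite ({1..n}-{i})" by auto
    have "j \<in> {1..n}-{i}" using assms(2,3) by auto
    thus ?thesis using sum.remove[OF f(1) assms(1)] sum.remove[OF f(2)] by metis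
  qed
  have "(\<Sum>k\<in>{1..n}-{i}-{j}. g k) = (\<Sum>k\<in>{1..n}-{i}-{j}. h k)"
    using assms(4) by (intro sum.cong) auto
  with A B show ?thesis by linarith
qed

lemma attains:
  fixes f :: "real \<Rightarrow> real"
  assumes "continuous_on UNIV f" "eps > 0"
  shows "\<exists>m\<in>{c-eps..c+eps}. Inf (f ` {c-eps..c+eps}) = f m \<and> (\<forall>y\<in>{c-eps..c+eps}. f m \<le> f y)"
    "\<exists>m\<in>{c-eps..c+eps}. Sup (f ` {c-eps..c+eps}) = f m \<and> (\<forall>y\<in>{c-eps..c+eps}. f y \<le> f m)"
proof -
  have co: "continuous_on {c-eps..c+eps} f" using assms(1) continuous_on_subset by blast
  have ne: "{c-eps..c+eps} \<noteq> {}" using assms by auto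
  obtain m where m: "m \<in> {c-eps..c+eps}" "\<forall>y\<in>{c-eps..c+eps}. f m \<le> f y"
    using continuous_attains_inf[OF compact_Icc ne co] by blast
  have "Inf (f ` {c-eps..c+eps}) = f m"
    using m by (intro cInf_eq_minimum) auto
  with m show "\<exists>m\<in>{c-eps..c+eps}. Inf (f ` {c-eps..c+eps}) = f m \<and> (\<forall>y\<in>{c-eps..c+eps}. f m \<le> f y)" by blast
  obtain M where M: "M \<in> {c-eps..c+eps}" "\<forall>y\<in>{c-eps..c+eps}. f y \<le> f M"
    using continuous_attains_sup[OF compact_Icc ne co] by blast
  have "Sup (f ` {c-eps..c+eps}) = f M"
    using M by (intro cSup_eq_maximum) auto
  with M show "\<exists>m\<in>{c-eps..c+eps}. Sup (f ` {c-eps..c+eps}) = f m \<and> (\<forall>y\<in>{c-eps..c+eps}. f y \<le> f m)" by blast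
qed

lemma nam_iff:
  "nam n b0 fs w = 1 \<longleftrightarrow> b0 + (\<Sum>k=1..n. fs k (w k)) \<ge> 0"
  "nam n b0 fs w = 0 \<longleftrightarrow> \<not> b0 + (\<Sum>k=1..n. fs k (w k)) \<ge> 0"
  unfolding nam_def step_def by simp_all

theorem proposition1:
  fixes n :: nat and b0 :: real and fs :: "nat \<Rightarrow> real \<Rightarrow> real"
    and x :: "nat \<Rightarrow> real" and eps :: real and l u :: "nat \<Rightarrow> real"
    and S :: "nat set" and i j :: nat
  assumes cont: "\<And>k. k \<in> {1..n} \<Longrightarrow> continuous_on UNIV (fs k)"
    and eps_pos: "eps > 0"
    and lu: "\<And>k. k \<in> {1..n} \<Longrightarrow> l k \<le> u k"
    and lower: "\<And>k. k \<in> {1..n} \<Longrightarrow> l k \<le> importance n b0 fs x eps k"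
    and upper: "\<And>k. k \<in> {1..n} \<Longrightarrow> importance n b0 fs x eps k \<le> u k"
    and suff: "sufficient_expl n b0 fs x eps S"
    and iS: "i \<in> S"
    and jS: "j \<in> {1..n} - S"
    and uil: "u i \<le> l j"
  shows "sufficient_expl n b0 fs x eps (insert j (S - {i}))"
proof -
  have Sn: "S \<subseteq> {1..n}" and SS: "\<forall>xt\<in>box n x eps. nam n b0 fs (combine S x xt) = nam n b0 fs x"
    using suff unfolding sufficient_expl_def by auto
  have i1: "i \<in> {1..n}" using Sn iS by auto
  have j1: "j \<in> {1..n}" and jnS: "j \<notin> S" using jS by auto
  have ij: "i \<noteq> j" using iS jnS by auto
  have imp: "importance n b0 fs x eps j - importance n b0 fs x eps i \<ge> 0"
    using lower[OF j1] upper[OF i1] uil by linarith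
  let ?S' = "insert j (S - {i})"
  let ?I = "\<lambda>k. {x k - eps .. x k + eps}"
  have inI: "xt k \<in> ?I k" if "xt \<in> box n x eps" "k \<in> {1..n}" for xt k
  proof -
    have "\<bar>xt k - x k\<bar> \<le> eps" using that unfolding box_def by blast
    hence "x k - eps \<le> xt k" "xt k \<le> x k + eps" by linarith+
    thus ?thesis by simp
  qed
  have xI: "x k \<in> ?I k" for k using eps_pos by auto
  have main: "nam n b0 fs (combine ?S' x xt) = nam n b0 fs x" if xt: "xt \<in> box n x eps" for xt
  proof (cases "nam n b0 fs x = 1")
    case True
    obtain m where m: "m \<in> ?I j" "Inf (fs j ` ?I j) = fs j m"
      using attains(1)[OF cont[OF j1] eps_pos, of "x j"] by blast
    obtain mi where mi: "Inf (fs i ` ?I i) = fs i mi" "\<forall>y\<in>?I i. fs i mi \<le> fs i y"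
      using attains(1)[OF cont[OF i1] eps_pos, of "x i"] by blast
    define z where "z = xt(j := m)"
    have zb: "z \<in> box n x eps" unfolding box_def
    proof (intro CollectI ballI)
      fix k assume k: "k \<in> {1..n}"
      show "\<bar>z k - x k\<bar> \<le> eps"
      proof (cases "k = j")
        case True thus ?thesis using m(1) unfolding z_def by (simp add: abs_le_iff)
      next
        case False thus ?thesis using xt k unfolding z_def box_def by simp
      qed
    qed
    have "nam n b0 fs (combine S x z) = 1" using bspec[OF SS zb] True by simp
    hence c: "b0 + (\<Sum>k=1..n. fs k (combine S x z k)) \<ge> 0"
      unfolding nam_iff by simp
    have d: "(\<Sum>k=1..n. fs k (combine ?S' x xt k)) = (\<Sum>k=1..n. fs k (combine S x z k))
        + (fs i (xt i) - fs i (x i)) + (fs j (x j) - fs j m)"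
    proof -
      have "fs k (combine ?S' x xt k) = fs k (combine S x z k)" if "k \<in> {1..n}" "k \<noteq> i" "k \<noteq> j" for k
        using that unfolding combine_def z_def by simp
      moreover have "combine ?S' x xt i = xt i" "combine S x z i = x i"
        "combine ?S' x xt j = x j" "combine S x z j = m"
        using iS jnS ij unfolding combine_def z_def by auto
      ultimately show ?thesis
        using sum_diff2[OF i1 j1 ij, of "\<lambda>k. fs k (combine ?S' x xt k)" "\<lambda>k. fs k (combine S x z k)"]
        by simp
    qed
    have e: "fs i mi \<le> fs i (xt i)" using mi inI[OF xt i1] by auto
    have "importance n b0 fs x eps i = fs i (x i) - fs i mi"
         "importance n b0 fs x eps j = fs j (x j) - fs j m"
      using True m mi unfolding importance_def by auto
    hence "b0 + (\<Sum>k=1..n. fs k (combine ?S' x xt k)) \<ge> 0" using c d e imp by linarith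
    hence "nam n b0 fs (combine ?S' x xt) = 1" unfolding nam_iff .
    thus ?thesis using True by simp
  next
    case False
    hence F0: "nam n b0 fs x = 0" unfolding nam_iff by simp
    obtain m where m: "m \<in> ?I j" "Sup (fs j ` ?I j) = fs j m"
      using attains(2)[OF cont[OF j1] eps_pos, of "x j"] by blast
    obtain mi where mi: "Sup (fs i ` ?I i) = fs i mi" "\<forall>y\<in>?I i. fs i y \<le> fs i mi"
      using attains(2)[OF cont[OF i1] eps_pos, of "x i"] by blast
    define z where "z = xt(j := m)"
    have zb: "z \<in> box n x eps" unfolding box_def
    proof (intro CollectI ballI)
      fix k assume k: "k \<in> {1..n}"
      show "\<bar>z k - x k\<bar> \<le> eps"
      proof (cases "k = j")
        case True thus ?thesis using m(1) unfolding z_def by (simp add: abs_le_iff)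
      next
        case False thus ?thesis using xt k unfolding z_def box_def by simp
      qed
    qed
    have "nam n b0 fs (combine S x z) = 0" using bspec[OF SS zb] F0 by simp
    hence c: "b0 + (\<Sum>k=1..n. fs k (combine S x z k)) < 0"
      unfolding nam_iff by simp
    have d: "(\<Sum>k=1..n. fs k (combine ?S' x xt k)) = (\<Sum>k=1..n. fs k (combine S x z k))
        + (fs i (xt i) - fs i (x i)) + (fs j (x j) - fs j m)"
    proof -
      have "fs k (combine ?S' x xt k) = fs k (combine S x z k)" if "k \<in> {1..n}" "k \<noteq> i" "k \<noteq> j" for k
        using that unfolding combine_def z_def by simp
      moreover have "combine ?S' x xt i = xt i" "combine S x z i = x i"
        "combine ?S' x xt j = x j" "combine S x z j = m"
        using iS jnS ij unfolding combine_def z_def by auto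
      ultimately show ?thesis
        using sum_diff2[OF i1 j1 ij, of "\<lambda>k. fs k (combine ?S' x xt k)" "\<lambda>k. fs k (combine S x z k)"]
        by simp
    qed
    have e: "fs i (xt i) \<le> fs i mi" using mi inI[OF xt i1] by auto
    have "importance n b0 fs x eps i = fs i mi - fs i (x i)"
         "importance n b0 fs x eps j = fs j m - fs j (x j)"
      using False m mi unfolding importance_def by auto
    hence "b0 + (\<Sum>k=1..n. fs k (combine ?S' x xt k)) < 0" using c d e imp by linarith
    hence "nam n b0 fs (combine ?S' x xt) = 0" unfolding nam_iff by simp
    thus ?thesis using F0 by simp
  qed
  show ?thesis unfolding sufficient_expl_def using Sn j1 main by auto
qed

end
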